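(* Let $R$ be a commutative ring with $1$, let $M$ be an le-module over $R$, and suppose the natural map $\psi:\mathrm{Spec}(M)\to\mathrm{Spec}(R/Ann(M))$ is surjective. Then the following are equivalent: (i) $\mathrm{Spec}(M)$ is a spectral space; (ii) $\mathrm{Spec}(M)$ is a $T_0$-space; (iii) for all $p,q\in\mathrm{Spec}(M)$, $V^*(p)=V^*(q)$ implies $p=q$; (iv) $|\mathrm{Spec}_P(M)|\leq 1$ for every $P\in\mathrm{Spec}(R)$; (v) $\psi$ is injective; (vi) $\mathrm{Spec}(M)$ is homeomorphic to $\mathrm{Spec}(R/Ann(M))$.
   Context: An le-module over $R$ is a complete lattice $(M,\leq)$ with greatest element $e$, with a commutative monoid operation $+$ (identity $0_M$) satisfying $m+\bigvee_{i}m_i=\bigvee_i(m+m_i)$ for all families, and a map $R\times M\to M$, $(r,m)\mapsto rm$, such that for all $r,r_1,r_2\in R$, $m,m_1,m_2,m_i\in M$: $r(m_1+m_2)=rm_1+rm_2$; $(r_1+r_2)m\leq r_1m+r_2m$; $(r_1r_2)m=r_1(r_2m)$; $1_Rm=m$; $0_Rm=r0_M=0_M$; $r(\bigvee_i m_i)=\bigvee_i rm_i$. A submodule element is $n\in M$ with $n+n\leq n$ and $rn\leq n$ for all $r\in R$; it is proper if $n\neq e$. For $n\in M$ put $(n:e)=\{r\in R: re\leq n\}$, and $Ann(M)=(0_M:e)$. A prime submodule element is a proper submodule element $p$ such that for all $r\in R$, $n\in M$, $rn\leq p$ implies $r\in(p:e)$ or $n\leq p$; $\mathrm{Spec}(M)$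 denotes the set of prime submodule elements, and for $P\in\mathrm{Spec}(R)$, $\mathrm{Spec}_P(M)=\{p\in\mathrm{Spec}(M):(p:e)=P\}$. For a submodule element $n$, $V^*(n)=\{p\in\mathrm{Spec}(M):(n:e)\subseteq(p:e)\}$; the Zariski topology on $\mathrm{Spec}(M)$ has as closed sets exactly the sets $V^*(n)$, $n$ a submodule element. The natural map is $\psi(p)=(p:e)/Ann(M)$. A topological space is spectral if it is $T_0$, quasi-compact, its quasi-compact open subsets are closed under finite intersection and form an open base, and every irreducible closed subset has a generic point. *)

theory Defs
  imports "HOL-Analysis.Analysis" "HOL-Algebra.Algebra"
begin

text \<open>An le-module over the commutative ring R: the complete lattice is the type 'm
  (greatest element e = Orderings.top), pl is the monoid operation +, z is 0_M, sm is the
  scalar action.\<close>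

definition le_module ::
  "('r,'b) ring_scheme \<Rightarrow> ('m::complete_lattice \<Rightarrow> 'm \<Rightarrow> 'm) \<Rightarrow> 'm \<Rightarrow> ('r \<Rightarrow> 'm \<Rightarrow> 'm) \<Rightarrow> bool"
where
  "le_module R pl z sm \<longleftrightarrow>
     cring R \<and>
     (\<forall>a b c. pl (pl a b) c = pl a (pl b c)) \<and>
     (\<forall>a b. pl a b = pl b a) \<and>
     (\<forall>a. pl z a = a) \<and>
     (\<forall>m A. A \<noteq> {} \<longrightarrow> pl m (Complete_Lattices.Sup A) = Sup (pl m ` A)) \<and>
     (\<forall>r\<in>carrier R. \<forall>m1 m2. sm r (pl m1 m2) = pl (sm r m1) (sm r m2)) \<and>
     (\<forall>r1\<in>carrier R. \<forall>r2\<in>carrier R. \<forall>m. sm (r1 \<oplus>\<^bsub>R\<^esub> r2) m \<le> pl (sm r1 m) (sm r2 m)) \<and>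
     (\<forall>r1\<in>carrier R. \<forall>r2\<in>carrier R. \<forall>m. sm (r1 \<otimes>\<^bsub>R\<^esub> r2) m = sm r1 (sm r2 m)) \<and>
     (\<forall>m. sm \<one>\<^bsub>R\<^esub> m = m) \<and>
     (\<forall>m. sm \<zero>\<^bsub>R\<^esub> m = z) \<and>
     (\<forall>r\<in>carrier R. sm r z = z) \<and>
     (\<forall>r\<in>carrier R. \<forall>A. sm r (Complete_Lattices.Sup A) = Sup (sm r ` A))"

definition submodule_elem ::
  "('r,'b) ring_scheme \<Rightarrow> ('m::complete_lattice \<Rightarrow> 'm \<Rightarrow> 'm) \<Rightarrow> ('r \<Rightarrow> 'm \<Rightarrow> 'm) \<Rightarrow> 'm \<Rightarrow> bool"
where
  "submodule_elem R pl sm n \<longleftrightarrow> pl n n \<le> n \<and> (\<forall>r\<in>carrier R. sm r n \<le> n)"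

definition colon :: "('r,'b) ring_scheme \<Rightarrow> ('r \<Rightarrow> 'm::complete_lattice \<Rightarrow> 'm) \<Rightarrow> 'm \<Rightarrow> 'r set"
where "colon R sm n = {r \<in> carrier R. sm r Orderings.top \<le> n}"

definition Ann :: "('r,'b) ring_scheme \<Rightarrow> 'm::complete_lattice \<Rightarrow> ('r \<Rightarrow> 'm \<Rightarrow> 'm) \<Rightarrow> 'r set"
where "Ann R z sm = colon R sm z"

definition prime_submodule_elem ::
  "('r,'b) ring_scheme \<Rightarrow> ('m::complete_lattice \<Rightarrow> 'm \<Rightarrow> 'm) \<Rightarrow> ('r \<Rightarrow> 'm \<Rightarrow> 'm) \<Rightarrow> 'm \<Rightarrow> bool"
where
  "prime_submodule_elem R pl sm p \<longleftrightarrow>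
     submodule_elem R pl sm p \<and> p \<noteq> Orderings.top \<and>
     (\<forall>r\<in>carrier R. \<forall>n. sm r n \<le> p \<longrightarrow> r \<in> colon R sm p \<or> n \<le> p)"

definition SpecM ::
  "('r,'b) ring_scheme \<Rightarrow> ('m::complete_lattice \<Rightarrow> 'm \<Rightarrow> 'm) \<Rightarrow> ('r \<Rightarrow> 'm \<Rightarrow> 'm) \<Rightarrow> 'm set"
where "SpecM R pl sm = {p. prime_submodule_elem R pl sm p}"

definition SpecP ::
  "('r,'b) ring_scheme \<Rightarrow> ('m::complete_lattice \<Rightarrow> 'm \<Rightarrow> 'm) \<Rightarrow> ('r \<Rightarrow> 'm \<Rightarrow> 'm) \<Rightarrow> 'r set \<Rightarrow> 'm set"
where "SpecP R pl sm P = {p \<in> SpecM R pl sm. colon R sm p = P}"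

definition SpecR :: "('a,'c) ring_scheme \<Rightarrow> 'a set set"
where "SpecR A = {P. primeideal P A}"

definition Vstar ::
  "('r,'b) ring_scheme \<Rightarrow> ('m::complete_lattice \<Rightarrow> 'm \<Rightarrow> 'm) \<Rightarrow> ('r \<Rightarrow> 'm \<Rightarrow> 'm) \<Rightarrow> 'm \<Rightarrow> 'm set"
where "Vstar R pl sm n = {p \<in> SpecM R pl sm. colon R sm n \<subseteq> colon R sm p}"

definition zariskiM ::
  "('r,'b) ring_scheme \<Rightarrow> ('m::complete_lattice \<Rightarrow> 'm \<Rightarrow> 'm) \<Rightarrow> ('r \<Rightarrow> 'm \<Rightarrow> 'm) \<Rightarrow> 'm topology"
where
  "zariskiM R pl sm = topology (\<lambda>U. U \<subseteq> SpecM R pl sm \<and>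
      (\<exists>n. submodule_elem R pl sm n \<and> SpecM R pl sm - U = Vstar R pl sm n))"

definition zariskiR :: "('a,'c) ring_scheme \<Rightarrow> 'a set topology"
where
  "zariskiR A = topology (\<lambda>U. U \<subseteq> SpecR A \<and>
      (\<exists>S. S \<subseteq> carrier A \<and> SpecR A - U = {P \<in> SpecR A. S \<subseteq> P}))"

text \<open>Natural map psi(p) = (p:e)/Ann(M), an ideal of R/Ann(M) (set of cosets).\<close>
definition psi ::
  "('r,'b) ring_scheme \<Rightarrow> 'm::complete_lattice \<Rightarrow> ('r \<Rightarrow> 'm \<Rightarrow> 'm) \<Rightarrow> 'm \<Rightarrow> 'r set set"
where "psi R z sm p = (\<lambda>r. Ann R z sm +>\<^bsub>R\<^esub> r) ` colon R sm p"

definition irreducible_in :: "'a topology \<Rightarrow> 'a set \<Rightarrow> bool"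
where "irreducible_in T Z \<longleftrightarrow> Z \<noteq> {} \<and> Z \<subseteq> topspace T \<and>
   (\<forall>A B. closedin T A \<and> closedin T B \<and> Z \<subseteq> A \<union> B \<longrightarrow> Z \<subseteq> A \<or> Z \<subseteq> B)"

definition spectral_space :: "'a topology \<Rightarrow> bool"
where "spectral_space T \<longleftrightarrow>
   t0_space T \<and> compact_space T \<and>
   (\<forall>U V. openin T U \<and> compactin T U \<and> openin T V \<and> compactin T V
          \<longrightarrow> compactin T (U \<inter> V)) \<and>
   (\<forall>U. openin T U \<longrightarrow> (\<exists>\<F>. (\<forall>W\<in>\<F>. openin T W \<and> compactin T W) \<and> \<Union>\<F> = U)) \<and>
   (\<forall>Z. closedin T Z \<and> irreducible_in T Z \<longrightarrow> (\<exists>x\<in>Z. T closure_of {x} = Z))"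

end

theory Submission
  imports Defs
begin


lemma (in ring) directed_Union_ideal:
  assumes ne: "C \<noteq> {}" and idC: "\<And>I. I \<in> C \<Longrightarrow> ideal I R"
    and dir: "\<And>I J. I \<in> C \<Longrightarrow> J \<in> C \<Longrightarrow> \<exists>K\<in>C. I \<subseteq> K \<and> J \<subseteq> K"
  shows "ideal (\<Union>C) R"
proof (rule idealI)
  show "ring R" by (rule ring_axioms)
  show "subgroup (\<Union>C) (add_monoid R)"
  proof (rule add.subgroupI)
    show "\<Union>C \<subseteq> carrier R"
    proof
      fix a assume "a \<in> \<Union>C"
      then obtain I where "I \<in> C" "a \<in> I" by (rule UnionE)
      then show "a \<in> carrier R" using ideal.Icarr[OF idC[OF \<open>I \<in> C\<close>]] by simp
    qed
    obtain I where I: "I \<in> C" using ne by blast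
    then have "\<zero> \<in> I" using additive_subgroup.zero_closed[OF ideal.axioms(1)[OF idC[OF I]]] by simp
    then show "\<Union>C \<noteq> {}" using I by blast
  next
    fix a assume "a \<in> \<Union>C"
    then obtain I where I: "I \<in> C" "a \<in> I" by (rule UnionE)
    then have "\<ominus> a \<in> I" using additive_subgroup.a_inv_closed[OF ideal.axioms(1)[OF idC[OF I(1)]]] by simp
    then show "\<ominus> a \<in> \<Union>C" using I(1) by (rule UnionI[rotated])
  next
    fix a b assume "a \<in> \<Union>C" "b \<in> \<Union>C"
    then obtain I J where IJ: "I \<in> C" "a \<in> I" "J \<in> C" "b \<in> J" by (meson UnionE)
    then obtain K where K: "K \<in> C" "I \<subseteq> K" "J \<subseteq> K" using dir by blast
    have "a \<in> K" "b \<in> K" using IJ K by auto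
    then have "a \<oplus> b \<in> K" using additive_subgroup.a_closed[OF ideal.axioms(1)[OF idC[OF K(1)]]] by simp
    then show "a \<oplus> b \<in> \<Union>C" using K(1) by (rule UnionI[rotated])
  qed
next
  fix a x assume "a \<in> \<Union>C" and x: "x \<in> carrier R"
  then obtain I where I: "I \<in> C" "a \<in> I" by (meson UnionE)
  have "x \<otimes> a \<in> I" by (rule ideal.I_l_closed[OF idC[OF I(1)] I(2) x])
  then show "x \<otimes> a \<in> \<Union>C" using I(1) by (rule UnionI[rotated])
next
  fix a x assume "a \<in> \<Union>C" and x: "x \<in> carrier R"
  then obtain I where I: "I \<in> C" "a \<in> I" by (meson UnionE)
  have "a \<otimes> x \<in> I" by (rule ideal.I_r_closed[OF idC[OF I(1)] I(2) x])
  then show "a \<otimes> x \<in> \<Union>C" using I(1) by (rule UnionI[rotated])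
qed

lemma (in cring) krull_avoid:
  assumes J: "ideal J R" and f: "f \<in> carrier R" and nf: "\<And>n::nat. f [^] n \<notin> J"
  shows "\<exists>P. primeideal P R \<and> J \<subseteq> P \<and> f \<notin> P"
proof -
  let ?A = "{K. ideal K R \<and> J \<subseteq> K \<and> (\<forall>n::nat. f [^] n \<notin> K)}"
  have "\<exists>Q \<in> ?A. \<forall>Y \<in> ?A. Q \<subseteq> Y \<longrightarrow> Y = Q"
  proof (rule Zorn_Lemma2, intro ballI)
    fix C assume C: "C \<in> chains ?A"
    show "\<exists>U \<in> ?A. \<forall>Y \<in> C. Y \<subseteq> U"
    proof (cases "C = {}")
      case True
      show ?thesis
      proof (rule bexI[of _ J])
        show "\<forall>Y\<in>C. Y \<subseteq> J" using True by simp
        show "J \<in> ?A" using J nf by simp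
      qed
    next
      case False
      have "ideal (\<Union>C) R"
      proof (rule directed_Union_ideal[OF False])
        show "\<And>I. I \<in> C \<Longrightarrow> ideal I R" using C unfolding chains_def by blast
        fix I K assume "I \<in> C" "K \<in> C"
        have "I \<subseteq> K \<or> K \<subseteq> I" using C \<open>I \<in> C\<close> \<open>K \<in> C\<close>
          unfolding chains_def chain_subset_def by blast
        then show "\<exists>L\<in>C. I \<subseteq> L \<and> K \<subseteq> L" using \<open>I \<in> C\<close> \<open>K \<in> C\<close> by blast
      qed
      moreover have "J \<subseteq> \<Union>C" using False C unfolding chains_def by blast
      moreover have "\<forall>n::nat. f [^] n \<notin> \<Union>C" using C unfolding chains_def by blast
      ultimately have UA: "\<Union>C \<in> ?A" by simp
      show ?thesis
      proof (rule bexI[OF _ UA])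
        show "\<forall>Y \<in> C. Y \<subseteq> \<Union>C" by (intro ballI Union_upper)
      qed
    qed
  qed
  then obtain Mx where MA: "Mx \<in> ?A" and Mmax0: "\<forall>Y \<in> ?A. Mx \<subseteq> Y \<longrightarrow> Y = Mx" by (rule bexE)
  have Mmax: "Y = Mx" if "Y \<in> ?A" "Mx \<subseteq> Y" for Y using Mmax0 that by (meson ballE)
  have Mid: "ideal Mx R" and JM: "J \<subseteq> Mx" and Mf: "\<And>n::nat. f [^] n \<notin> Mx" using MA by auto
  interpret Mi: ideal Mx R by (rule Mid)
  have ext: "\<exists>n::nat. f [^] n \<in> Mx <+> PIdl a" if a: "a \<in> carrier R" "a \<notin> Mx" for a
  proof (rule ccontr)
    assume nn: "\<not> ?thesis"
    have id2: "ideal (Mx <+> PIdl a) R" by (rule add_ideals[OF Mid cgenideal_ideal[OF a(1)]])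
    have sub: "Mx \<subseteq> Mx <+> PIdl a"
    proof
      fix m assume "m \<in> Mx"
      then have "m = m \<oplus> \<zero> \<otimes> a" "\<zero> \<in> carrier R" using a Mi.Icarr by auto
      then show "m \<in> Mx <+> PIdl a" unfolding set_add_def' cgenideal_def using \<open>m \<in> Mx\<close> by blast
    qed
    have "a \<in> Mx <+> PIdl a"
    proof -
      have "a = \<zero> \<oplus> \<one> \<otimes> a" using a by simp
      moreover have "\<zero> \<in> Mx" by (rule Mi.zero_closed)
      ultimately show ?thesis unfolding set_add_def' cgenideal_def by blast
    qed
    have "Mx <+> PIdl a \<in> ?A" using id2 sub JM nn by blast
    then have "Mx <+> PIdl a = Mx" using Mmax sub by blast
    then show False using a \<open>a \<in> Mx <+> PIdl a\<close> by simp
  qed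
  have "primeideal Mx R"
  proof (rule primeidealI[OF Mid is_cring])
    have "f [^] (0::nat) = \<one>" by simp
    then have "\<one> \<notin> Mx" using Mf[of 0] by simp
    then show "carrier R \<noteq> Mx" by (metis one_closed)
    fix a b assume a: "a \<in> carrier R" and b: "b \<in> carrier R" and ab: "a \<otimes> b \<in> Mx"
    show "a \<in> Mx \<or> b \<in> Mx"
    proof (rule ccontr)
      assume "\<not> (a \<in> Mx \<or> b \<in> Mx)"
      then have "a \<notin> Mx" "b \<notin> Mx" by auto
      obtain m :: nat where "f [^] m \<in> Mx <+> PIdl a" using ext[OF a \<open>a \<notin> Mx\<close>] by blast
      then obtain p x where p: "p \<in> Mx" "x \<in> carrier R" "f [^] m = p \<oplus> x \<otimes> a"
        unfolding set_add_def' cgenideal_def by blast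
      obtain n :: nat where "f [^] n \<in> Mx <+> PIdl b" using ext[OF b \<open>b \<notin> Mx\<close>] by blast
      then obtain q y where q: "q \<in> Mx" "y \<in> carrier R" "f [^] n = q \<oplus> y \<otimes> b"
        unfolding set_add_def' cgenideal_def by blast
      have pc: "p \<in> carrier R" "q \<in> carrier R" using p(1) q(1) Mi.Icarr by auto
      have xa: "x \<otimes> a \<in> carrier R" "y \<otimes> b \<in> carrier R" using p q a b by auto
      have "f [^] (m + n) = f [^] m \<otimes> f [^] n" using f by (simp add: nat_pow_mult)
      also have "\<dots> = (p \<oplus> x \<otimes> a) \<otimes> (q \<oplus> y \<otimes> b)" using p q by simp
      also have "\<dots> = p \<otimes> (q \<oplus> y \<otimes> b) \<oplus> (x \<otimes> a) \<otimes> (q \<oplus> y \<otimes> b)"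
        using pc xa by (simp add: l_distr)
      also have "(x \<otimes> a) \<otimes> (q \<oplus> y \<otimes> b) = (x \<otimes> a) \<otimes> q \<oplus> (x \<otimes> a) \<otimes> (y \<otimes> b)"
        using pc xa by (simp add: r_distr)
      also have "(x \<otimes> a) \<otimes> (y \<otimes> b) = (x \<otimes> y) \<otimes> (a \<otimes> b)"
        using p q a b by (simp add: m_ac)
      finally have eq: "f [^] (m + n) = p \<otimes> (q \<oplus> y \<otimes> b) \<oplus> ((x \<otimes> a) \<otimes> q \<oplus> (x \<otimes> y) \<otimes> (a \<otimes> b))" .
      have h1: "p \<otimes> (q \<oplus> y \<otimes> b) \<in> Mx" using Mi.I_r_closed[OF p(1)] pc xa by simp
      have h2: "(x \<otimes> a) \<otimes> q \<in> Mx" using Mi.I_l_closed[OF q(1) xa(1)] by simp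
      have h3: "(x \<otimes> y) \<otimes> (a \<otimes> b) \<in> Mx" using Mi.I_l_closed[OF ab] p(2) q(2) by simp
      have "f [^] (m + n) \<in> Mx" unfolding eq
        by (intro Mi.a_closed h1 h2 h3)
      then show False using Mf by blast
    qed
  qed
  moreover have "f \<notin> Mx" using Mf[of 1] f by simp
  ultimately show ?thesis using JM by (intro exI[of _ Mx]) simp
qed

lemma (in ring) genideal_finite:
  assumes A: "A \<subseteq> carrier R" and x: "x \<in> Idl A"
  shows "\<exists>F. finite F \<and> F \<subseteq> A \<and> x \<in> Idl F"
proof -
  let ?C = "{Idl F | F. finite F \<and> F \<subseteq> A}"
  have "ideal (\<Union>?C) R"
  proof (rule directed_Union_ideal)
    have "Idl {} \<in> ?C" by blast
    then show "?C \<noteq> {}" by (metis empty_iff)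
    show "\<And>I. I \<in> ?C \<Longrightarrow> ideal I R" using A genideal_ideal by auto
    fix I J assume "I \<in> ?C" "J \<in> ?C"
    then obtain F G where F: "finite F" "F \<subseteq> A" "I = Idl F" and G: "finite G" "G \<subseteq> A" "J = Idl G"
      by blast
    have FG: "F \<union> G \<subseteq> carrier R" using F G A by blast
    have "F \<union> G \<subseteq> Idl (F \<union> G)" by (rule genideal_self[OF FG])
    then have "Idl F \<subseteq> Idl (F \<union> G)" "Idl G \<subseteq> Idl (F \<union> G)"
      using genideal_minimal[OF genideal_ideal[OF FG]] by blast+
    moreover have "Idl (F \<union> G) \<in> ?C" using F(1,2) G(1,2) by auto
    ultimately show "\<exists>K\<in>?C. I \<subseteq> K \<and> J \<subseteq> K" using F(3) G(3) by (intro bexI[of _ "Idl (F \<union> G)"]) auto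
  qed
  moreover have "A \<subseteq> \<Union>?C"
  proof
    fix a assume "a \<in> A"
    then have "a \<in> Idl {a}" using A genideal_self' by blast
    moreover have "Idl {a} \<in> ?C" using \<open>a \<in> A\<close> by auto
    ultimately show "a \<in> \<Union>?C" by (rule UnionI[rotated])
  qed
  ultimately have "Idl A \<subseteq> \<Union>?C" by (rule genideal_minimal)
  then have "x \<in> \<Union>?C" using x by (rule subsetD)
  then obtain I where "I \<in> ?C" "x \<in> I" by (rule UnionE)
  then obtain F where "finite F" "F \<subseteq> A" "I = Idl F" by auto
  then show ?thesis using \<open>x \<in> I\<close> by auto
qed


definition VV :: "('a,'c) ring_scheme \<Rightarrow> 'x set \<Rightarrow> ('x \<Rightarrow> 'a set) \<Rightarrow> 'a set \<Rightarrow> 'x set"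
  where "VV R Sp c S = {x \<in> Sp. S \<subseteq> c x}"

definition ZT :: "('a,'c) ring_scheme \<Rightarrow> 'x set \<Rightarrow> ('x \<Rightarrow> 'a set) \<Rightarrow> 'x topology"
  where "ZT R Sp c = topology (\<lambda>U. U \<subseteq> Sp \<and> (\<exists>S. S \<subseteq> carrier R \<and> Sp - U = VV R Sp c S))"

lemma primeideal_pow:
  assumes P: "primeideal P R" and f: "f \<in> carrier R" and fn: "f [^]\<^bsub>R\<^esub> (n::nat) \<in> P"
  shows "f \<in> P"
  using fn
proof (induction n)
  case 0
  interpret primeideal P R by (rule P)
  have "\<one>\<^bsub>R\<^esub> \<in> P" using 0 by simp
  then have "P = carrier R" by (rule one_imp_carrier)
  then show ?case using I_notcarr by simp
next
  case (Suc n)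
  interpret primeideal P R by (rule P)
  have "f [^]\<^bsub>R\<^esub> n \<otimes>\<^bsub>R\<^esub> f \<in> P" using Suc.prems by simp
  then have "f [^]\<^bsub>R\<^esub> n \<in> P \<or> f \<in> P" using I_prime f by simp
  then show ?case using Suc.IH by blast
qed

locale zar = cring R for R (structure) +
  fixes Sp :: "'x set" and c :: "'x \<Rightarrow> 'a set"
  assumes prim: "x \<in> Sp \<Longrightarrow> primeideal (c x) R"
begin

abbreviation "V \<equiv> VV R Sp c"
abbreviation "T \<equiv> ZT R Sp c"

lemma c_carr: "x \<in> Sp \<Longrightarrow> c x \<subseteq> carrier R"
proof -
  assume x: "x \<in> Sp"
  interpret P: primeideal "c x" R by (rule prim[OF x])
  show ?thesis by (rule P.a_subset)
qed

lemma one_notin: "x \<in> Sp \<Longrightarrow> \<one> \<notin> c x"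
proof
  assume x: "x \<in> Sp" and o: "\<one> \<in> c x"
  interpret P: primeideal "c x" R by (rule prim[OF x])
  have "c x = carrier R" by (rule P.one_imp_carrier[OF o])
  then show False using P.I_notcarr by simp
qed

lemma V_sub: "V S \<subseteq> Sp" unfolding VV_def by auto

lemma V_carrier: "V (carrier R) = {}"
  using c_carr one_notin unfolding VV_def by auto

lemma V_empty: "V {} = Sp" unfolding VV_def by auto

lemma V_Un:
  assumes S: "S \<subseteq> carrier R" and Tc: "T' \<subseteq> carrier R"
  shows "V S \<union> V T' = V {s \<otimes> t | s t. s \<in> S \<and> t \<in> T'}"
proof (intro equalityI subsetI)
  fix x assume "x \<in> V S \<union> V T'"
  then have x: "x \<in> Sp" and st: "S \<subseteq> c x \<or> T' \<subseteq> c x" unfolding VV_def by auto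
  interpret P: primeideal "c x" R by (rule prim[OF x])
  have "s \<otimes> t \<in> c x" if "s \<in> S" "t \<in> T'" for s t
  proof (cases "S \<subseteq> c x")
    case True
    then show ?thesis using P.I_r_closed[of s t] that S Tc by auto
  next
    case False
    then have "T' \<subseteq> c x" using st by simp
    then show ?thesis using P.I_l_closed[of t s] that S Tc by auto
  qed
  then show "x \<in> V {s \<otimes> t | s t. s \<in> S \<and> t \<in> T'}" unfolding VV_def using x by auto
next
  fix x assume "x \<in> V {s \<otimes> t | s t. s \<in> S \<and> t \<in> T'}"
  then have x: "x \<in> Sp" and st: "\<And>s t. s \<in> S \<Longrightarrow> t \<in> T' \<Longrightarrow> s \<otimes> t \<in> c x" unfolding VV_def by auto
  interpret P: primeideal "c x" R by (rule prim[OF x])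
  show "x \<in> V S \<union> V T'"
  proof (rule ccontr)
    assume "x \<notin> V S \<union> V T'"
    then obtain s t where "s \<in> S" "s \<notin> c x" "t \<in> T'" "t \<notin> c x" unfolding VV_def using x by auto
    then show False using P.I_prime[of s t] st S Tc by auto
  qed
qed

lemma istop: "istopology (\<lambda>U. U \<subseteq> Sp \<and> (\<exists>S. S \<subseteq> carrier R \<and> Sp - U = V S))"
proof -
  have A: "U \<inter> W \<subseteq> Sp \<and> (\<exists>S. S \<subseteq> carrier R \<and> Sp - (U \<inter> W) = V S)"
    if U: "U \<subseteq> Sp \<and> (\<exists>S. S \<subseteq> carrier R \<and> Sp - U = V S)"
     and W: "W \<subseteq> Sp \<and> (\<exists>S. S \<subseteq> carrier R \<and> Sp - W = V S)" for U W
  proof -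
    obtain S1 S2 where S1: "S1 \<subseteq> carrier R" "Sp - U = V S1" and S2: "S2 \<subseteq> carrier R" "Sp - W = V S2"
      using U W by blast
    have "Sp - (U \<inter> W) = (Sp - U) \<union> (Sp - W)" by (rule Diff_Int)
    also have "\<dots> = V S1 \<union> V S2" by (simp only: S1(2) S2(2))
    also have "\<dots> = V {s \<otimes> t | s t. s \<in> S1 \<and> t \<in> S2}" by (rule V_Un[OF S1(1) S2(1)])
    finally have e: "Sp - (U \<inter> W) = V {s \<otimes> t | s t. s \<in> S1 \<and> t \<in> S2}" .
    have c: "{s \<otimes> t | s t. s \<in> S1 \<and> t \<in> S2} \<subseteq> carrier R" using S1(1) S2(1) by auto
    have u: "U \<inter> W \<subseteq> Sp" using U by blast
    show ?thesis
    proof (rule conjI[OF u])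
      show "\<exists>S. S \<subseteq> carrier R \<and> Sp - (U \<inter> W) = V S"
        by (rule exI[of _ "{s \<otimes> t | s t. s \<in> S1 \<and> t \<in> S2}"], rule conjI[OF c e])
    qed
  qed
  have B: "\<Union>K \<subseteq> Sp \<and> (\<exists>S. S \<subseteq> carrier R \<and> Sp - \<Union>K = V S)"
    if K: "\<forall>U\<in>K. U \<subseteq> Sp \<and> (\<exists>S. S \<subseteq> carrier R \<and> Sp - U = V S)" for K
  proof -
    have "\<forall>U\<in>K. \<exists>S. S \<subseteq> carrier R \<and> Sp - U = V S" using K by blast
    then have "\<exists>Sf. \<forall>U\<in>K. Sf U \<subseteq> carrier R \<and> Sp - U = V (Sf U)" by (rule bchoice)
    then obtain Sf where Sf: "\<forall>U\<in>K. Sf U \<subseteq> carrier R \<and> Sp - U = V (Sf U)" by (elim exE)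
    have SfU: "Sp - U = V (Sf U)" if "U \<in> K" for U using Sf that by blast
    have SfC: "Sf U \<subseteq> carrier R" if "U \<in> K" for U using Sf that by blast
    have e: "Sp - \<Union>K = V (\<Union>U\<in>K. Sf U)"
    proof (intro equalityI subsetI)
      fix x assume x: "x \<in> Sp - \<Union>K"
      have "Sf U \<subseteq> c x" if "U \<in> K" for U
      proof -
        have "x \<in> Sp - U" using x that by blast
        then have "x \<in> V (Sf U)" by (simp only: SfU[OF that])
        then show ?thesis unfolding VV_def by simp
      qed
      then show "x \<in> V (\<Union>U\<in>K. Sf U)" using x unfolding VV_def by auto
    next
      fix x assume x: "x \<in> V (\<Union>U\<in>K. Sf U)"
      have "x \<notin> U" if "U \<in> K" for U
      proof -
        have "x \<in> V (Sf U)" using x that unfolding VV_def by auto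
        then have "x \<in> Sp - U" by (simp only: SfU[OF that])
        then show ?thesis by simp
      qed
      then show "x \<in> Sp - \<Union>K" using x unfolding VV_def by auto
    qed
    have c: "(\<Union>U\<in>K. Sf U) \<subseteq> carrier R" using SfC by blast
    have u: "\<Union>K \<subseteq> Sp" using K by blast
    show ?thesis
    proof (rule conjI[OF u])
      show "\<exists>S. S \<subseteq> carrier R \<and> Sp - \<Union>K = V S"
        by (rule exI[of _ "\<Union>U\<in>K. Sf U"], rule conjI[OF c e])
    qed
  qed
  show ?thesis unfolding istopology_def
    apply (rule conjI)
     apply (intro allI impI)
     apply (erule (1) A)
    apply (intro allI impI)
    apply (erule B)
    done
qed

lemma openin_T: "openin T U \<longleftrightarrow> U \<subseteq> Sp \<and> (\<exists>S. S \<subseteq> carrier R \<and> Sp - U = V S)"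
  unfolding ZT_def using topology_inverse'[OF istop] by simp

lemma topspace_T: "topspace T = Sp"
proof -
  have "openin T Sp" unfolding openin_T using V_carrier by blast
  then have "Sp \<subseteq> topspace T" by (rule openin_subset)
  moreover have "topspace T \<subseteq> Sp" unfolding topspace_def openin_T by blast
  ultimately show ?thesis by blast
qed

lemma closedin_T: "closedin T C \<longleftrightarrow> (\<exists>S. S \<subseteq> carrier R \<and> C = V S)"
proof
  assume "closedin T C"
  then have "C \<subseteq> Sp" "openin T (Sp - C)" unfolding closedin_def topspace_T by auto
  then obtain S where "S \<subseteq> carrier R" "Sp - (Sp - C) = V S" unfolding openin_T by blast
  then show "\<exists>S. S \<subseteq> carrier R \<and> C = V S" using \<open>C \<subseteq> Sp\<close> by (metis double_diff order_refl)
next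
  assume "\<exists>S. S \<subseteq> carrier R \<and> C = V S"
  then obtain S where S: "S \<subseteq> carrier R" "C = V S" by blast
  then have "C \<subseteq> Sp" using V_sub by simp
  moreover have "Sp - (Sp - C) = V S" using S \<open>C \<subseteq> Sp\<close> by (metis double_diff order_refl)
  ultimately show "closedin T C" unfolding closedin_def topspace_T openin_T using S by blast
qed

lemma closed_V: "S \<subseteq> carrier R \<Longrightarrow> closedin T (V S)"
  unfolding closedin_T by blast

lemma closure_T: assumes x: "x \<in> Sp" shows "T closure_of {x} = V (c x)"
proof
  show "T closure_of {x} \<subseteq> V (c x)"
    by (rule closure_of_minimal) (use x c_carr closed_V in \<open>auto simp: VV_def\<close>)
next
  have "closedin T (T closure_of {x})" by simp
  then obtain S where S: "S \<subseteq> carrier R" "T closure_of {x} = V S" unfolding closedin_T by blast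
  have "{x} \<subseteq> T closure_of {x}" by (rule closure_of_subset) (use x topspace_T in auto)
  then have "S \<subseteq> c x" using S unfolding VV_def by auto
  then show "V (c x) \<subseteq> T closure_of {x}" using S unfolding VV_def by auto
qed

lemma t0_T: "t0_space T \<longleftrightarrow> inj_on c Sp"
proof
  assume t0: "t0_space T"
  show "inj_on c Sp"
  proof (rule inj_onI, rule ccontr)
    fix x y assume x: "x \<in> Sp" and y: "y \<in> Sp" and cxy: "c x = c y" and ne: "x \<noteq> y"
    then obtain C where C: "closedin T C" "x \<notin> C \<longleftrightarrow> y \<in> C"
      using t0 unfolding t0_space topspace_T by blast
    then obtain S where "C = V S" unfolding closedin_T by blast
    then have "x \<in> C \<longleftrightarrow> y \<in> C" using x y cxy unfolding VV_def by auto
    then show False using C(2) by blast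
  qed
next
  assume inj: "inj_on c Sp"
  show "t0_space T" unfolding t0_space topspace_T
  proof (intro ballI impI)
    fix x y assume x: "x \<in> Sp" and y: "y \<in> Sp" and ne: "x \<noteq> y"
    then have ne': "c x \<noteq> c y" using inj inj_on_def by metis
    show "\<exists>C. closedin T C \<and> (x \<notin> C \<longleftrightarrow> y \<in> C)"
    proof (cases "c x \<subseteq> c y")
      case True
      then have "\<not> c y \<subseteq> c x" using ne' by blast
      then show ?thesis using closed_V[OF c_carr[OF y]] x y unfolding VV_def by blast
    next
      case False
      then show ?thesis using closed_V[OF c_carr[OF x]] x y unfolding VV_def by blast
    qed
  qed
qed

end

locale zar_surj = zar +
  fixes I :: "'a set"
  assumes Iid: "ideal I R" and Isub: "x \<in> Sp \<Longrightarrow> I \<subseteq> c x"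
    and Isurj: "primeideal P R \<Longrightarrow> I \<subseteq> P \<Longrightarrow> \<exists>x\<in>Sp. c x = P"
begin

definition D where "D f = Sp - V {f}"

lemma D_open: "f \<in> carrier R \<Longrightarrow> openin T (D f)"
  unfolding D_def openin_T by (rule conjI, blast, rule exI[of _ "{f}"]) (auto simp: V_sub double_diff)

lemma D_mem: "x \<in> D f \<longleftrightarrow> x \<in> Sp \<and> f \<notin> c x"
  unfolding D_def VV_def by auto

lemma key:
  assumes S: "S \<subseteq> carrier R" and f: "f \<in> carrier R" and H: "\<forall>x\<in>Sp. S \<subseteq> c x \<longrightarrow> f \<in> c x"
  shows "\<exists>n::nat. f [^] n \<in> Idl (S \<union> I)"
proof (rule ccontr)
  assume nn: "\<not> ?thesis"
  interpret Ii: ideal I R by (rule Iid)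
  have SI: "S \<union> I \<subseteq> carrier R" using S Ii.a_subset by blast
  have J: "ideal (Idl (S \<union> I)) R" by (rule genideal_ideal[OF SI])
  obtain P where P: "primeideal P R" "Idl (S \<union> I) \<subseteq> P" "f \<notin> P"
    using krull_avoid[OF J f] nn by blast
  have "S \<union> I \<subseteq> P" using genideal_self[OF SI] P(2) by blast
  then have "I \<subseteq> P" by blast
  then obtain x where x: "x \<in> Sp" "c x = P" using Isurj[OF P(1)] by blast
  have "S \<subseteq> c x" using x(2) \<open>S \<union> I \<subseteq> P\<close> by simp
  then have "f \<in> c x" using H x(1) by simp
  then show False using x(2) P(3) by simp
qed

lemma compact_D: assumes f: "f \<in> carrier R" shows "compactin T (D f)"
  unfolding compactin_def
proof (intro conjI allI impI)
  show "D f \<subseteq> topspace T" unfolding topspace_T D_def by blast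
  fix \<U> assume U: "(\<forall>U\<in>\<U>. openin T U) \<and> D f \<subseteq> \<Union>\<U>"
  then have opn: "\<And>U. U \<in> \<U> \<Longrightarrow> openin T U" by simp
  have "\<forall>U\<in>\<U>. \<exists>S. U \<subseteq> Sp \<and> S \<subseteq> carrier R \<and> Sp - U = V S"
  proof
    fix U assume "U \<in> \<U>"
    then have "U \<subseteq> Sp \<and> (\<exists>S. S \<subseteq> carrier R \<and> Sp - U = V S)" using opn unfolding openin_T by simp
    then show "\<exists>S. U \<subseteq> Sp \<and> S \<subseteq> carrier R \<and> Sp - U = V S" by (elim conjE exE) (intro exI conjI)
  qed
  then have "\<exists>Sf. \<forall>U\<in>\<U>. U \<subseteq> Sp \<and> Sf U \<subseteq> carrier R \<and> Sp - U = V (Sf U)" by (rule bchoice)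
  then obtain Sf where Sf: "\<forall>U\<in>\<U>. U \<subseteq> Sp \<and> Sf U \<subseteq> carrier R \<and> Sp - U = V (Sf U)" by (elim exE)
  have SfU: "Sp - U = V (Sf U)" if "U \<in> \<U>" for U using bspec[OF Sf that] by simp
  have SfC: "Sf U \<subseteq> carrier R" if "U \<in> \<U>" for U using bspec[OF Sf that] by simp
  define S where "S = (\<Union>U\<in>\<U>. Sf U)"
  have Sc: "S \<subseteq> carrier R" unfolding S_def using SfC by blast
  have H: "\<forall>x\<in>Sp. S \<subseteq> c x \<longrightarrow> f \<in> c x"
  proof (intro ballI impI, rule ccontr)
    fix x assume x: "x \<in> Sp" and Sx: "S \<subseteq> c x" and fx: "f \<notin> c x"
    then have "x \<in> D f" by (auto simp: D_mem)
    then obtain U where U1: "U \<in> \<U>" "x \<in> U" using U by blast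
    have "Sf U \<subseteq> c x" using Sx U1 unfolding S_def by blast
    then have "x \<in> V (Sf U)" using x unfolding VV_def by blast
    then have "x \<in> Sp - U" by (simp only: SfU[OF U1(1)])
    then show False using U1(2) by simp
  qed
  obtain n :: nat where n: "f [^] n \<in> Idl (S \<union> I)" using key[OF Sc f H] by blast
  interpret Ii: ideal I R by (rule Iid)
  have SI: "S \<union> I \<subseteq> carrier R" using Sc Ii.a_subset by blast
  obtain F where F: "finite F" "F \<subseteq> S \<union> I" "f [^] n \<in> Idl F"
    using genideal_finite[OF SI n] by blast
  have "\<forall>s\<in>F \<inter> S. \<exists>U\<in>\<U>. s \<in> Sf U" unfolding S_def by blast
  then have "\<forall>s\<in>F \<inter> S. \<exists>U. U \<in> \<U> \<and> s \<in> Sf U" by blast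
  then have "\<exists>Uf. \<forall>s\<in>F \<inter> S. Uf s \<in> \<U> \<and> s \<in> Sf (Uf s)" by (rule bchoice)
  then obtain Uf where Uf: "\<forall>s\<in>F \<inter> S. Uf s \<in> \<U> \<and> s \<in> Sf (Uf s)" by (elim exE)
  show "\<exists>\<F>. finite \<F> \<and> \<F> \<subseteq> \<U> \<and> D f \<subseteq> \<Union>\<F>"
  proof (intro exI conjI)
    show "finite (Uf ` (F \<inter> S))" using F(1) by simp
    show "Uf ` (F \<inter> S) \<subseteq> \<U>" using Uf by blast
    show "D f \<subseteq> \<Union> (Uf ` (F \<inter> S))"
    proof (rule subsetI, rule ccontr)
      fix x assume xD: "x \<in> D f" and xn: "x \<notin> \<Union> (Uf ` (F \<inter> S))"
      then have x: "x \<in> Sp" and fx: "f \<notin> c x" by (auto simp: D_mem)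
      interpret P: primeideal "c x" R by (rule prim[OF x])
      have "F \<subseteq> c x"
      proof
        fix s assume s: "s \<in> F"
        show "s \<in> c x"
        proof (cases "s \<in> S")
          case True
          then have "Uf s \<in> \<U>" "s \<in> Sf (Uf s)" using Uf s by auto
          moreover have "x \<notin> Uf s" using xn s True by blast
          ultimately have "x \<in> Sp - Uf s" using x by simp
          then have "x \<in> V (Sf (Uf s))" by (simp only: SfU[OF \<open>Uf s \<in> \<U>\<close>])
          then show ?thesis using \<open>s \<in> Sf (Uf s)\<close> unfolding VV_def by blast
        next
          case False
          then have "s \<in> I" using s F(2) by blast
          then show ?thesis using Isub[OF x] by blast
        qed
      qed
      then have "Idl F \<subseteq> c x" by (rule genideal_minimal[OF P.is_ideal])
      then have "f [^] n \<in> c x" using F(3) by blast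
      then have "f \<in> c x" by (rule primeideal_pow[OF prim[OF x] f])
      then show False using fx by blast
    qed
  qed
qed

lemma D_one: "D \<one> = Sp" using one_notin by (auto simp: D_mem)

lemma compact_T: "compact_space T"
  unfolding compact_space_def topspace_T using compact_D[of \<one>] D_one by simp

lemma open_eq_UD: assumes S: "S \<subseteq> carrier R" "Sp - U = V S" "U \<subseteq> Sp"
  shows "U = \<Union> (D ` S)"
proof (intro equalityI subsetI)
  fix x assume "x \<in> U"
  then have "x \<in> Sp" "x \<notin> V S" using S by auto
  then obtain f where "f \<in> S" "f \<notin> c x" unfolding VV_def by blast
  then show "x \<in> \<Union> (D ` S)" using \<open>x \<in> Sp\<close> by (auto simp: D_mem)
next
  fix x assume "x \<in> \<Union> (D ` S)"
  then obtain f where f: "f \<in> S" "x \<in> Sp" "f \<notin> c x" by (auto simp: D_mem)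
  then have "x \<notin> V S" unfolding VV_def by blast
  then have "x \<notin> Sp - U" using S(2) by simp
  then show "x \<in> U" using f(2) by simp
qed

lemma basis: assumes "openin T U"
  shows "\<exists>\<F>. (\<forall>W\<in>\<F>. openin T W \<and> compactin T W) \<and> \<Union>\<F> = U"
proof -
  have "U \<subseteq> Sp \<and> (\<exists>S. S \<subseteq> carrier R \<and> Sp - U = V S)" using assms unfolding openin_T .
  then obtain S where S: "S \<subseteq> carrier R" "Sp - U = V S" "U \<subseteq> Sp" by (elim conjE exE) simp
  have e: "\<Union> (D ` S) = U" using open_eq_UD[OF S] by simp
  have "\<forall>W\<in>D ` S. openin T W \<and> compactin T W" using S(1) D_open compact_D by auto
  then show ?thesis using e by (intro exI[of _ "D ` S"] conjI)
qed

lemma compact_open_fin: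
  assumes "openin T U" "compactin T U"
  shows "\<exists>F. finite F \<and> F \<subseteq> carrier R \<and> U = \<Union> (D ` F)"
proof -
  have "U \<subseteq> Sp \<and> (\<exists>S. S \<subseteq> carrier R \<and> Sp - U = V S)" using assms(1) unfolding openin_T .
  then obtain S where S: "S \<subseteq> carrier R" "Sp - U = V S" "U \<subseteq> Sp" by (elim conjE exE) simp
  have U: "U = \<Union> (D ` S)" by (rule open_eq_UD[OF S])
  have "\<forall>W\<in>D ` S. openin T W" using S(1) D_open by auto
  moreover have "U \<subseteq> \<Union>(D ` S)" using U by simp
  ultimately have "\<exists>\<F>. finite \<F> \<and> \<F> \<subseteq> D ` S \<and> U \<subseteq> \<Union>\<F>"
    using assms(2) unfolding compactin_def by blast
  then obtain \<F> where \<F>: "finite \<F>" "\<F> \<subseteq> D ` S" "U \<subseteq> \<Union>\<F>" by blast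
  then obtain F where F: "F \<subseteq> S" "finite F" "\<F> = D ` F" by (meson finite_subset_image)
  have "U \<subseteq> \<Union> (D ` F)" using F(3) \<F>(3) by simp
  moreover have "\<Union> (D ` F) \<subseteq> U" using F(1) U by auto
  ultimately have "U = \<Union> (D ` F)" by (rule equalityI)
  moreover have "F \<subseteq> carrier R" using F(1) S(1) by (rule order_trans)
  ultimately show ?thesis using F(2) by (intro exI[of _ F] conjI)
qed

lemma D_Int: assumes "f \<in> carrier R" "g \<in> carrier R" shows "D f \<inter> D g = D (f \<otimes> g)"
proof (intro equalityI subsetI)
  fix x assume "x \<in> D f \<inter> D g"
  then have x: "x \<in> Sp" "f \<notin> c x" "g \<notin> c x" by (auto simp: D_mem)
  interpret P: primeideal "c x" R by (rule prim[OF x(1)])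
  have "f \<otimes> g \<notin> c x" using P.I_prime[OF assms] x by blast
  then show "x \<in> D (f \<otimes> g)" using x by (auto simp: D_mem)
next
  fix x assume "x \<in> D (f \<otimes> g)"
  then have x: "x \<in> Sp" "f \<otimes> g \<notin> c x" by (auto simp: D_mem)
  interpret P: primeideal "c x" R by (rule prim[OF x(1)])
  have "f \<notin> c x" using P.I_r_closed[of f g] assms x by blast
  moreover have "g \<notin> c x" using P.I_l_closed[of g f] assms x by blast
  ultimately show "x \<in> D f \<inter> D g" using x by (auto simp: D_mem)
qed

lemma compact_Int:
  assumes "openin T U" "compactin T U" "openin T W" "compactin T W"
  shows "compactin T (U \<inter> W)"
proof -
  obtain F where F: "finite F" "F \<subseteq> carrier R" "U = \<Union> (D ` F)" using compact_open_fin[OF assms(1,2)] by metis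
  obtain G where G: "finite G" "G \<subseteq> carrier R" "W = \<Union> (D ` G)" using compact_open_fin[OF assms(3,4)] by metis
  have "U \<inter> W = \<Union> ((\<lambda>(f, g). D (f \<otimes> g)) ` (F \<times> G))"
  proof -
    have "U \<inter> W = (\<Union>p\<in>F \<times> G. D (fst p) \<inter> D (snd p))" using F(3) G(3) by auto
    also have "\<dots> = (\<Union>p\<in>F \<times> G. D (fst p \<otimes> snd p))"
    proof (rule SUP_cong[OF refl])
      fix p assume "p \<in> F \<times> G"
      then have "fst p \<in> carrier R" "snd p \<in> carrier R" using F(2) G(2) by auto
      then show "D (fst p) \<inter> D (snd p) = D (fst p \<otimes> snd p)" by (rule D_Int)
    qed
    finally show ?thesis by (simp add: case_prod_beta)
  qed
  moreover have "compactin T (\<Union> ((\<lambda>(f, g). D (f \<otimes> g)) ` (F \<times> G)))"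
  proof (rule compactin_Union)
    show "finite ((\<lambda>(f, g). D (f \<otimes> g)) ` (F \<times> G))" using F(1) G(1) by simp
    fix S assume "S \<in> (\<lambda>(f, g). D (f \<otimes> g)) ` (F \<times> G)"
    then obtain f g where fg: "f \<in> F" "g \<in> G" "S = D (f \<otimes> g)" by auto
    have "f \<otimes> g \<in> carrier R" using fg(1,2) F(2) G(2) by auto
    then show "compactin T S" using compact_D fg(3) by simp
  qed
  ultimately show ?thesis by simp
qed

lemma generic:
  assumes Z: "closedin T Z" "irreducible_in T Z"
  shows "\<exists>x\<in>Z. T closure_of {x} = Z"
proof -
  obtain S where S: "S \<subseteq> carrier R" "Z = V S" using Z(1) unfolding closedin_T by metis
  have Zne: "Z \<noteq> {}" using Z(2) unfolding irreducible_in_def by blast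
  have ZX: "Z \<subseteq> Sp" using S V_sub by simp
  define P where "P = \<Inter> (c ` Z)"
  have idl: "ideal J R" if J: "J \<in> c ` Z" for J
  proof -
    obtain z where z: "z \<in> Z" "J = c z" using J by blast
    then have zX: "z \<in> Sp" using ZX by blast
    interpret Q: primeideal "c z" R by (rule prim[OF zX])
    show ?thesis unfolding z(2) by (rule Q.is_ideal)
  qed
  have cZ: "c ` Z \<noteq> {}" using Zne by simp
  have Pid: "ideal P R" unfolding P_def by (rule i_Intersect[OF idl cZ])
  have IP: "I \<subseteq> P" unfolding P_def using Isub ZX by blast
  have SP: "S \<subseteq> P" unfolding P_def using S unfolding VV_def by blast
  have Pprime: "primeideal P R"
  proof (rule primeidealI[OF Pid is_cring])
    obtain z where z: "z \<in> Z" using Zne by blast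
    have "\<one> \<notin> P" unfolding P_def using one_notin z ZX by blast
    then show "carrier R \<noteq> P" by auto
    fix a b assume a: "a \<in> carrier R" and b: "b \<in> carrier R" and ab: "a \<otimes> b \<in> P"
    have "Z \<subseteq> V {a} \<union> V {b}"
    proof
      fix z assume z: "z \<in> Z"
      then have zX: "z \<in> Sp" using ZX by blast
      interpret Q: primeideal "c z" R by (rule prim[OF zX])
      have "a \<otimes> b \<in> c z" using ab z unfolding P_def by blast
      then have "a \<in> c z \<or> b \<in> c z" using Q.I_prime[OF a b] by blast
      then show "z \<in> V {a} \<union> V {b}" using zX unfolding VV_def by blast
    qed
    moreover have irr: "\<forall>A B. closedin T A \<and> closedin T B \<and> Z \<subseteq> A \<union> B \<longrightarrow> Z \<subseteq> A \<or> Z \<subseteq> B"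
      using Z(2) unfolding irreducible_in_def by (elim conjE)
    moreover have "closedin T (V {a})" "closedin T (V {b})" using closed_V a b by auto
    ultimately have "Z \<subseteq> V {a} \<or> Z \<subseteq> V {b}" by simp
    then show "a \<in> P \<or> b \<in> P" unfolding P_def VV_def by blast
  qed
  obtain x0 where x0: "x0 \<in> Sp" "c x0 = P" using Isurj[OF Pprime IP] by blast
  have "S \<subseteq> c x0" using SP x0(2) by simp
  then have xZ: "x0 \<in> Z" using S(2) x0(1) unfolding VV_def by simp
  have cl: "T closure_of {x0} = Z"
  proof -
    have "V P = Z"
    proof (intro equalityI subsetI)
      fix y assume "y \<in> V P"
      then have "y \<in> Sp" "P \<subseteq> c y" unfolding VV_def by auto
      then show "y \<in> Z" using S(2) SP unfolding VV_def by auto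
    next
      fix y assume "y \<in> Z" then show "y \<in> V P" using ZX unfolding P_def VV_def by blast
    qed
    then show ?thesis using closure_T[OF x0(1)] x0(2) by simp
  qed
  show ?thesis
  proof (rule bexI[of _ x0])
    show "T closure_of {x0} = Z" by (rule cl)
    show "x0 \<in> Z" by (rule xZ)
  qed
qed

lemma spectral_T: "spectral_space T \<longleftrightarrow> t0_space T"
proof -
  have 1: "compact_space T" by (rule compact_T)
  have 2: "\<forall>U W. openin T U \<and> compactin T U \<and> openin T W \<and> compactin T W \<longrightarrow> compactin T (U \<inter> W)"
  proof (intro allI impI)
    fix U W assume "openin T U \<and> compactin T U \<and> openin T W \<and> compactin T W"
    then show "compactin T (U \<inter> W)" by (elim conjE) (rule compact_Int)
  qed
  have 3: "\<forall>U. openin T U \<longrightarrow> (\<exists>\<F>. (\<forall>W\<in>\<F>. openin T W \<and> compactin T W) \<and> \<Union>\<F> = U)"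
  proof (intro allI impI)
    fix U assume "openin T U" then show "\<exists>\<F>. (\<forall>W\<in>\<F>. openin T W \<and> compactin T W) \<and> \<Union>\<F> = U"
      by (rule basis)
  qed
  have 4: "\<forall>Z. closedin T Z \<and> irreducible_in T Z \<longrightarrow> (\<exists>x\<in>Z. T closure_of {x} = Z)"
  proof (intro allI impI)
    fix Z assume "closedin T Z \<and> irreducible_in T Z" then show "\<exists>x\<in>Z. T closure_of {x} = Z"
      by (elim conjE) (rule generic)
  qed
  show ?thesis unfolding spectral_space_def
    by (simp only: eqTrueI[OF 1] eqTrueI[OF 2] eqTrueI[OF 3] eqTrueI[OF 4] simp_thms)
qed

end

locale lm = cring R for R (structure) +
  fixes pl :: "'m::complete_lattice \<Rightarrow> 'm \<Rightarrow> 'm" and z :: 'm and sm :: "'a \<Rightarrow> 'm \<Rightarrow> 'm"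
  assumes M: "le_module R pl z sm"
begin

abbreviation "Spec \<equiv> SpecM R pl sm"
abbreviation "col \<equiv> colon R sm"
abbreviation "subm \<equiv> submodule_elem R pl sm"
abbreviation "AnnM \<equiv> Ann R z sm"

lemma pl_Sup: "A \<noteq> {} \<Longrightarrow> pl m (Sup A) = Sup (pl m ` A)"
  using M unfolding le_module_def by blast
lemma pl_comm: "pl a b = pl b a"
  using M unfolding le_module_def by blast
lemma pl_z: "pl z a = a"
  using M unfolding le_module_def by blast
lemma sm_add: "r1 \<in> carrier R \<Longrightarrow> r2 \<in> carrier R \<Longrightarrow> sm (r1 \<oplus> r2) m \<le> pl (sm r1 m) (sm r2 m)"
  using M unfolding le_module_def by blast
lemma sm_mult: "r1 \<in> carrier R \<Longrightarrow> r2 \<in> carrier R \<Longrightarrow> sm (r1 \<otimes> r2) m = sm r1 (sm r2 m)"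
  using M unfolding le_module_def by blast
lemma sm_one: "sm \<one> m = m"
  using M unfolding le_module_def by blast
lemma sm_zero: "sm \<zero> m = z"
  using M unfolding le_module_def by blast
lemma sm_z: "r \<in> carrier R \<Longrightarrow> sm r z = z"
  using M unfolding le_module_def by blast
lemma sm_Sup: "r \<in> carrier R \<Longrightarrow> sm r (Sup A) = Sup (sm r ` A)"
  using M unfolding le_module_def by blast

lemma sm_mono: assumes r: "r \<in> carrier R" and ab: "a \<le> b" shows "sm r a \<le> sm r b"
proof -
  have "sm r b = sm r (Sup {a, b})" using ab by (simp add: sup_absorb2)
  also have "\<dots> = Sup (sm r ` {a, b})" by (rule sm_Sup[OF r])
  also have "\<dots> = sup (sm r a) (sm r b)" by simp
  finally have "sm r b = sup (sm r a) (sm r b)" .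
  then show ?thesis by (metis sup_ge1)
qed

lemma pl_mono: assumes ab: "a \<le> b" shows "pl m a \<le> pl m b"
proof -
  have "pl m b = pl m (Sup {a, b})" using ab by (simp add: sup_absorb2)
  also have "\<dots> = Sup (pl m ` {a, b})" by (rule pl_Sup) simp
  also have "\<dots> = sup (pl m a) (pl m b)" by simp
  finally have "pl m b = sup (pl m a) (pl m b)" .
  then show ?thesis by (metis sup_ge1)
qed

lemma pl_mono2: assumes "a \<le> a'" "b \<le> b'" shows "pl a b \<le> pl a' b'"
proof -
  have "pl a b \<le> pl a b'" by (rule pl_mono[OF assms(2)])
  also have "\<dots> = pl b' a" by (rule pl_comm)
  also have "\<dots> \<le> pl b' a'" by (rule pl_mono[OF assms(1)])
  also have "\<dots> = pl a' b'" by (rule pl_comm)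
  finally show ?thesis .
qed

lemma subm_D: "subm n \<Longrightarrow> pl n n \<le> n" "subm n \<Longrightarrow> r \<in> carrier R \<Longrightarrow> sm r n \<le> n"
  unfolding submodule_elem_def by auto

lemma z_le: assumes "subm n" shows "z \<le> n"
proof -
  have "sm \<zero> n \<le> n" using subm_D(2)[OF assms] by simp
  then show ?thesis by (simp add: sm_zero)
qed

lemma col_mem: "r \<in> col n \<longleftrightarrow> r \<in> carrier R \<and> sm r Orderings.top \<le> n"
  unfolding colon_def by simp

lemma col_mono: "n \<le> n' \<Longrightarrow> col n \<subseteq> col n'"
  unfolding colon_def by (auto intro: order_trans)

lemma col_ideal: assumes n: "subm n" shows "ideal (col n) R"
proof (rule idealI[OF ring_axioms])
  show "subgroup (col n) (add_monoid R)"
  proof (rule add.subgroupI)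
    show "col n \<subseteq> carrier R" unfolding colon_def by blast
    have "\<zero> \<in> col n" unfolding col_mem using z_le[OF n] by (simp add: sm_zero)
    then show "col n \<noteq> {}" by blast
  next
    fix a assume a: "a \<in> col n"
    then have ac: "a \<in> carrier R" and ae: "sm a Orderings.top \<le> n" unfolding col_mem by auto
    have eq: "\<ominus> a = \<ominus> \<one> \<otimes> a" using ac by (simp add: l_minus)
    have "sm (\<ominus> \<one> \<otimes> a) Orderings.top = sm (\<ominus> \<one>) (sm a Orderings.top)" using ac by (simp add: sm_mult)
    also have "\<dots> \<le> sm (\<ominus> \<one>) n" by (rule sm_mono[OF _ ae]) simp
    also have "\<dots> \<le> n" by (rule subm_D(2)[OF n]) simp
    finally show "\<ominus> a \<in> col n" unfolding col_mem using ac eq by simp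
  next
    fix a b assume "a \<in> col n" "b \<in> col n"
    then have ac: "a \<in> carrier R" "b \<in> carrier R" and ae: "sm a Orderings.top \<le> n" "sm b Orderings.top \<le> n"
      unfolding col_mem by auto
    have "sm (a \<oplus> b) Orderings.top \<le> pl (sm a Orderings.top) (sm b Orderings.top)" by (rule sm_add[OF ac])
    also have "\<dots> \<le> pl n n" by (rule pl_mono2[OF ae])
    also have "\<dots> \<le> n" by (rule subm_D(1)[OF n])
    finally show "a \<oplus> b \<in> col n" unfolding col_mem using ac by simp
  qed
next
  fix a x assume a: "a \<in> col n" and x: "x \<in> carrier R"
  then have ac: "a \<in> carrier R" and ae: "sm a Orderings.top \<le> n" unfolding col_mem by auto
  have "sm (x \<otimes> a) Orderings.top = sm x (sm a Orderings.top)" using ac x by (simp add: sm_mult)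
  also have "\<dots> \<le> sm x n" by (rule sm_mono[OF x ae])
  also have "\<dots> \<le> n" by (rule subm_D(2)[OF n x])
  finally have "sm (x \<otimes> a) Orderings.top \<le> n" .
  then show "x \<otimes> a \<in> col n" unfolding col_mem using ac x by simp
  then show "a \<otimes> x \<in> col n" using ac x by (simp add: m_comm)
qed

lemma Spec_D: assumes "p \<in> Spec"
  shows "subm p" "p \<noteq> Orderings.top" "\<And>r n. r \<in> carrier R \<Longrightarrow> sm r n \<le> p \<Longrightarrow> r \<in> col p \<or> n \<le> p"
  using assms unfolding SpecM_def prime_submodule_elem_def by auto

lemma col_prime: assumes p: "p \<in> Spec" shows "primeideal (col p) R"
proof (rule primeidealI[OF col_ideal[OF Spec_D(1)[OF p]] is_cring])
  show "carrier R \<noteq> col p"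
  proof
    assume "carrier R = col p"
    then have "\<one> \<in> col p" by (metis one_closed)
    then have "Orderings.top \<le> p" unfolding col_mem by (simp add: sm_one)
    then show False using Spec_D(2)[OF p] by (simp add: top_le)
  qed
  fix a b assume a: "a \<in> carrier R" and b: "b \<in> carrier R" and ab: "a \<otimes> b \<in> col p"
  then have "sm a (sm b Orderings.top) \<le> p" unfolding col_mem by (simp add: sm_mult)
  then have "a \<in> col p \<or> sm b Orderings.top \<le> p" by (rule Spec_D(3)[OF p a])
  then show "a \<in> col p \<or> b \<in> col p" unfolding col_mem using b by blast
qed

lemma subm_z: "subm z"
  unfolding submodule_elem_def using pl_z sm_z by simp

lemma Ann_ideal: "ideal AnnM R"
  unfolding Ann_def by (rule col_ideal[OF subm_z])

lemma Ann_sub: "subm n \<Longrightarrow> AnnM \<subseteq> col n"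
  unfolding Ann_def by (rule col_mono[OF z_le])

definition gen :: "'a set \<Rightarrow> 'm" where
  "gen S = Inf {n. subm n \<and> (\<forall>s\<in>S. sm s Orderings.top \<le> n)}"

lemma gen_subm: "subm (gen S)"
  unfolding submodule_elem_def
proof (intro conjI ballI)
  let ?N = "{n. subm n \<and> (\<forall>s\<in>S. sm s Orderings.top \<le> n)}"
  show "pl (gen S) (gen S) \<le> gen S" unfolding gen_def
  proof (rule Complete_Lattices.Inf_greatest)
    fix n assume n: "n \<in> ?N"
    then have le: "Complete_Lattices.Inf ?N \<le> n" by (rule Complete_Lattices.Inf_lower)
    have "pl (Complete_Lattices.Inf ?N) (Complete_Lattices.Inf ?N) \<le> pl n n" by (rule pl_mono2[OF le le])
    also have "\<dots> \<le> n" using n subm_D(1) by blast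
    finally show "pl (Complete_Lattices.Inf ?N) (Complete_Lattices.Inf ?N) \<le> n" .
  qed
  fix r assume r: "r \<in> carrier R"
  show "sm r (gen S) \<le> gen S" unfolding gen_def
  proof (rule Complete_Lattices.Inf_greatest)
    fix n assume n: "n \<in> ?N"
    then have "Complete_Lattices.Inf ?N \<le> n" by (rule Complete_Lattices.Inf_lower)
    then have "sm r (Complete_Lattices.Inf ?N) \<le> sm r n" by (rule sm_mono[OF r])
    also have "\<dots> \<le> n" using n subm_D(2) r by blast
    finally show "sm r (Complete_Lattices.Inf ?N) \<le> n" .
  qed
qed

lemma gen_col: assumes "S \<subseteq> carrier R" shows "S \<subseteq> col (gen S)"
proof
  fix s assume s: "s \<in> S"
  have "sm s Orderings.top \<le> gen S" unfolding gen_def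
    by (rule Complete_Lattices.Inf_greatest) (use s in auto)
  then show "s \<in> col (gen S)" using s assms by (auto simp: col_mem)
qed

lemma gen_le: assumes "subm p" "S \<subseteq> col p" shows "gen S \<le> p"
proof -
  have "\<forall>s\<in>S. sm s Orderings.top \<le> p" using assms(2) by (auto simp: col_mem)
  then show ?thesis unfolding gen_def using assms(1) by (intro Complete_Lattices.Inf_lower) simp
qed

lemma Vstar_eq: "Vstar R pl sm n = VV R Spec col (col n)"
  unfolding Vstar_def VV_def by simp

lemma VV_gen: assumes "S \<subseteq> carrier R" shows "VV R Spec col S = Vstar R pl sm (gen S)"
  unfolding Vstar_eq unfolding VV_def
proof (intro Collect_cong conj_cong refl iffI)
  fix p assume p: "p \<in> Spec" and "S \<subseteq> col p"
  then show "col (gen S) \<subseteq> col p" using col_mono gen_le Spec_D(1)[OF p] by blast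
next
  fix p assume "p \<in> Spec" and "col (gen S) \<subseteq> col p"
  then show "S \<subseteq> col p" using gen_col[OF assms] by blast
qed

lemma zariskiM_eq: "zariskiM R pl sm = ZT R Spec col"
proof -
  have "(\<lambda>U. U \<subseteq> Spec \<and> (\<exists>n. subm n \<and> Spec - U = Vstar R pl sm n))
      = (\<lambda>U. U \<subseteq> Spec \<and> (\<exists>S. S \<subseteq> carrier R \<and> Spec - U = VV R Spec col S))"
  proof (rule ext, rule conj_cong[OF refl], rule iffI)
    fix U assume "\<exists>n. subm n \<and> Spec - U = Vstar R pl sm n"
    then obtain n where "Spec - U = Vstar R pl sm n" by blast
    then have "Spec - U = VV R Spec col (col n)" by (simp add: Vstar_eq)
    moreover have "col n \<subseteq> carrier R" unfolding colon_def by blast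
    ultimately show "\<exists>S. S \<subseteq> carrier R \<and> Spec - U = VV R Spec col S" by (intro exI conjI)
  next
    fix U assume "\<exists>S. S \<subseteq> carrier R \<and> Spec - U = VV R Spec col S"
    then obtain S where S: "S \<subseteq> carrier R" "Spec - U = VV R Spec col S" by blast
    then have "Spec - U = Vstar R pl sm (gen S)" using VV_gen[OF S(1)] by simp
    then show "\<exists>n. subm n \<and> Spec - U = Vstar R pl sm n" using gen_subm by (intro exI conjI)
  qed
  then show ?thesis unfolding zariskiM_def ZT_def by simp
qed

sublocale Z: zar R Spec col
  by (rule zar.intro[OF is_cring]) (simp add: zar_axioms_def col_prime)

lemma inj_Vstar: "(\<forall>p\<in>Spec. \<forall>q\<in>Spec. Vstar R pl sm p = Vstar R pl sm q \<longrightarrow> p = q) \<longleftrightarrow> inj_on col Spec"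
proof
  assume H: "\<forall>p\<in>Spec. \<forall>q\<in>Spec. Vstar R pl sm p = Vstar R pl sm q \<longrightarrow> p = q"
  show "inj_on col Spec"
  proof (rule inj_onI)
    fix p q assume "p \<in> Spec" "q \<in> Spec" "col p = col q"
    moreover then have "Vstar R pl sm p = Vstar R pl sm q" unfolding Vstar_eq by simp
    ultimately show "p = q" using H by blast
  qed
next
  assume inj: "inj_on col Spec"
  show "\<forall>p\<in>Spec. \<forall>q\<in>Spec. Vstar R pl sm p = Vstar R pl sm q \<longrightarrow> p = q"
  proof (intro ballI impI)
    fix p q assume p: "p \<in> Spec" and q: "q \<in> Spec" and e: "Vstar R pl sm p = Vstar R pl sm q"
    have "p \<in> Vstar R pl sm p" using p unfolding Vstar_def by simp
    then have "p \<in> Vstar R pl sm q" using e by simp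
    then have 1: "col q \<subseteq> col p" unfolding Vstar_def by simp
    have "q \<in> Vstar R pl sm q" using q unfolding Vstar_def by simp
    then have "q \<in> Vstar R pl sm p" using e by simp
    then have 2: "col p \<subseteq> col q" unfolding Vstar_def by simp
    have "col p = col q" using 1 2 by (rule equalityI[rotated])
    then show "p = q" using inj p q by (simp add: inj_on_def)
  qed
qed

lemma inj_SpecP: "(\<forall>P\<in>SpecR R. \<forall>p\<in>SpecP R pl sm P. \<forall>q\<in>SpecP R pl sm P. p = q) \<longleftrightarrow> inj_on col Spec"
proof
  assume H: "\<forall>P\<in>SpecR R. \<forall>p\<in>SpecP R pl sm P. \<forall>q\<in>SpecP R pl sm P. p = q"
  show "inj_on col Spec"
  proof (rule inj_onI)
    fix p q assume p: "p \<in> Spec" and q: "q \<in> Spec" and e: "col p = col q"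
    have P: "col p \<in> SpecR R" unfolding SpecR_def using col_prime[OF p] by simp
    have "p \<in> SpecP R pl sm (col p)" "q \<in> SpecP R pl sm (col p)" unfolding SpecP_def using p q e by auto
    then show "p = q" using H P by blast
  qed
next
  assume inj: "inj_on col Spec"
  show "\<forall>P\<in>SpecR R. \<forall>p\<in>SpecP R pl sm P. \<forall>q\<in>SpecP R pl sm P. p = q"
  proof (intro ballI)
    fix P p q assume "p \<in> SpecP R pl sm P" "q \<in> SpecP R pl sm P"
    then have "p \<in> Spec" "q \<in> Spec" "col p = col q" unfolding SpecP_def by auto
    then show "p = q" using inj by (simp add: inj_on_def)
  qed
qed

interpretation AI: ideal AnnM R by (rule Ann_ideal)

lemma psi_eq: "psi R z sm p = (+>) AnnM ` col p"
  unfolding psi_def by simp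

lemma Union_img: assumes "ideal J R" "AnnM \<subseteq> J" shows "\<Union> ((+>) AnnM ` J) = J"
  using ideal_incl_iff[OF Ann_ideal assms(1)] assms(2) by simp

lemma Union_psi: "p \<in> Spec \<Longrightarrow> \<Union> (psi R z sm p) = col p"
  unfolding psi_eq by (rule Union_img[OF col_ideal[OF Spec_D(1)] Ann_sub[OF Spec_D(1)]])

lemma inj_psi: "inj_on (psi R z sm) Spec \<longleftrightarrow> inj_on col Spec"
proof
  assume inj: "inj_on (psi R z sm) Spec"
  show "inj_on col Spec"
  proof (rule inj_onI)
    fix p q assume p: "p \<in> Spec" and q: "q \<in> Spec" and e: "col p = col q"
    then have "psi R z sm p = psi R z sm q" unfolding psi_eq by simp
    then show "p = q" using inj p q by (simp add: inj_on_def)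
  qed
next
  assume inj: "inj_on col Spec"
  show "inj_on (psi R z sm) Spec"
  proof (rule inj_onI)
    fix p q assume p: "p \<in> Spec" and q: "q \<in> Spec" and e: "psi R z sm p = psi R z sm q"
    then have "col p = col q" using Union_psi[OF p] Union_psi[OF q] by metis
    then show "p = q" using inj p q by (simp add: inj_on_def)
  qed
qed

lemma quot_carr: "a \<in> carrier R \<Longrightarrow> AnnM +> a \<in> carrier (R Quot AnnM)"
  unfolding FactRing_def A_RCOSETS_def' by auto

lemma quot_carrE: assumes "Xc \<in> carrier (R Quot AnnM)" obtains a where "a \<in> carrier R" "Xc = AnnM +> a"
  using assms unfolding FactRing_def A_RCOSETS_def' by auto

lemma quot_mult: "a \<in> carrier R \<Longrightarrow> b \<in> carrier R \<Longrightarrow>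
    (AnnM +> a) \<otimes>\<^bsub>R Quot AnnM\<^esub> (AnnM +> b) = AnnM +> (a \<otimes> b)"
  unfolding FactRing_def using AI.rcoset_mult_add by simp

lemma quot_cring: "cring (R Quot AnnM)"
  by (rule AI.quotient_is_cring[OF is_cring])

lemma img_sub_iff: assumes J: "ideal J R" "AnnM \<subseteq> J" and S: "S \<subseteq> carrier R"
  shows "(+>) AnnM ` S \<subseteq> (+>) AnnM ` J \<longleftrightarrow> S \<subseteq> J"
proof
  assume H: "(+>) AnnM ` S \<subseteq> (+>) AnnM ` J"
  have Jc: "(+>) AnnM ` J \<subseteq> carrier (R Quot AnnM)"
    using quot_carr ideal.Icarr[OF J(1)] by blast
  show "S \<subseteq> J"
  proof
    fix s assume s: "s \<in> S"
    then have "AnnM +> s \<in> (+>) AnnM ` J" using H by blast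
    then have "s \<in> \<Union> ((+>) AnnM ` J)"
      using canonical_proj_vimage_mem_iff[OF Ann_ideal Jc] s S by blast
    then show "s \<in> J" using Union_img[OF J] by simp
  qed
next
  assume "S \<subseteq> J" then show "(+>) AnnM ` S \<subseteq> (+>) AnnM ` J" by (rule image_mono)
qed

lemma Union_sub_iff: assumes J: "ideal J R" "AnnM \<subseteq> J" and S: "S' \<subseteq> carrier (R Quot AnnM)"
  shows "S' \<subseteq> (+>) AnnM ` J \<longleftrightarrow> \<Union> S' \<subseteq> J"
proof
  assume "S' \<subseteq> (+>) AnnM ` J"
  then have "\<Union> S' \<subseteq> \<Union> ((+>) AnnM ` J)" by (rule Union_mono)
  then show "\<Union> S' \<subseteq> J" using Union_img[OF J] by simp
next
  assume H: "\<Union> S' \<subseteq> J"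
  show "S' \<subseteq> (+>) AnnM ` J"
  proof
    fix Xc assume Xc: "Xc \<in> S'"
    then obtain a where a: "a \<in> carrier R" "Xc = AnnM +> a" using S quot_carrE by blast
    then have "a \<in> \<Union> S'" using canonical_proj_vimage_mem_iff[OF Ann_ideal S a(1)] Xc by simp
    then have "a \<in> J" using H by blast
    then show "Xc \<in> (+>) AnnM ` J" using a(2) by blast
  qed
qed

lemma quot_prime: assumes P: "primeideal P R" and AP: "AnnM \<subseteq> P"
  shows "primeideal ((+>) AnnM ` P) (R Quot AnnM)"
proof -
  interpret PP: primeideal P R by (rule P)
  let ?Q = "(+>) AnnM ` P"
  have UQ: "\<Union> ?Q = P" by (rule Union_img[OF PP.is_ideal AP])
  have Qid: "ideal ?Q (R Quot AnnM)" by (rule ring_ideal_imp_quot_ideal[OF Ann_ideal PP.is_ideal])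
  have Qc: "?Q \<subseteq> carrier (R Quot AnnM)" using quot_carr PP.Icarr by blast
  show ?thesis
  proof (rule primeidealI[OF Qid quot_cring])
    show "carrier (R Quot AnnM) \<noteq> ?Q"
    proof
      assume "carrier (R Quot AnnM) = ?Q"
      then have "AnnM +> \<one> \<in> ?Q" using quot_carr[OF one_closed] by simp
      then have "\<one> \<in> \<Union> ?Q" using canonical_proj_vimage_mem_iff[OF Ann_ideal Qc one_closed] by simp
      then have "\<one> \<in> P" using UQ by simp
      then have "P = carrier R" by (rule PP.one_imp_carrier)
      then show False using PP.I_notcarr by simp
    qed
    fix Xc Yc assume Xc: "Xc \<in> carrier (R Quot AnnM)" and Yc: "Yc \<in> carrier (R Quot AnnM)"
      and XY: "Xc \<otimes>\<^bsub>R Quot AnnM\<^esub> Yc \<in> ?Q"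
    obtain a where a: "a \<in> carrier R" "Xc = AnnM +> a" using Xc quot_carrE by blast
    obtain b where b: "b \<in> carrier R" "Yc = AnnM +> b" using Yc quot_carrE by blast
    have "AnnM +> (a \<otimes> b) \<in> ?Q" using XY a b quot_mult by simp
    then have "a \<otimes> b \<in> \<Union> ?Q" using canonical_proj_vimage_mem_iff[OF Ann_ideal Qc] a(1) b(1) by simp
    then have "a \<otimes> b \<in> P" using UQ by simp
    then have "a \<in> P \<or> b \<in> P" using PP.I_prime a(1) b(1) by simp
    then show "Xc \<in> ?Q \<or> Yc \<in> ?Q" using a(2) b(2) by blast
  qed
qed

end

locale lms = lm +
  assumes surj: "psi R z sm ` SpecM R pl sm = SpecR (R Quot Ann R z sm)"
begin

lemma Isurj: assumes P: "primeideal P R" and AP: "AnnM \<subseteq> P" shows "\<exists>x\<in>Spec. col x = P"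
proof -
  have "(+>) AnnM ` P \<in> SpecR (R Quot AnnM)" unfolding SpecR_def using quot_prime[OF P AP] by simp
  then obtain x where x: "x \<in> Spec" "(+>) AnnM ` P = psi R z sm x" using surj by (metis imageE)
  have "col x = \<Union> (psi R z sm x)" using Union_psi[OF x(1)] by simp
  also have "\<dots> = \<Union> ((+>) AnnM ` P)" using x(2) by simp
  also have "\<dots> = P" by (rule Union_img[OF primeideal.axioms(1)[OF P] AP])
  finally show ?thesis by (rule bexI[OF _ x(1)])
qed

sublocale ZS: zar_surj R Spec col AnnM
  by (rule zar_surj.intro[OF Z.zar_axioms]) (simp add: zar_surj_axioms_def Ann_ideal Ann_sub Spec_D(1) Isurj)

lemma zariskiR_eq: "zariskiR Q = ZT Q (SpecR Q) (\<lambda>P. P)"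
  unfolding zariskiR_def ZT_def VV_def by (rule refl)

lemma homeo: "inj_on col Spec \<longleftrightarrow> zariskiM R pl sm homeomorphic_space zariskiR (R Quot AnnM)"
proof -
  let ?Q = "R Quot AnnM"
  let ?Yc = "SpecR ?Q"
  interpret ZY: zar ?Q ?Yc "\<lambda>P. P"
    by (rule zar.intro[OF quot_cring]) (simp add: zar_axioms_def SpecR_def)
  have t0Yc: "t0_space (ZT ?Q ?Yc (\<lambda>P. P))" using ZY.t0_T by simp
  show ?thesis
  proof
    assume inj: "inj_on col Spec"
    have injpsi: "inj_on (psi R z sm) Spec" using inj inj_psi by simp
    have psiY: "psi R z sm x \<in> ?Yc" if "x \<in> Spec" for x using surj that by blast
    have psiI: "psi R z sm x = (+>) AnnM ` col x" for x by (rule psi_eq)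
    have hm: "homeomorphic_map (ZT R Spec col) (ZT ?Q ?Yc (\<lambda>P. P)) (psi R z sm)"
    proof (rule bijective_closed_imp_homeomorphic_map)
      show "continuous_map (ZT R Spec col) (ZT ?Q ?Yc (\<lambda>P. P)) (psi R z sm)"
        unfolding continuous_map_closedin Z.topspace_T ZY.topspace_T
      proof (intro conjI allI impI)
        show "psi R z sm \<in> Spec \<rightarrow> ?Yc" using psiY by blast
        fix C assume "closedin (ZT ?Q ?Yc (\<lambda>P. P)) C"
        then obtain S' where S': "S' \<subseteq> carrier ?Q" "C = VV ?Q ?Yc (\<lambda>P. P) S'"
          unfolding ZY.closedin_T by metis
        have Uc: "\<Union> S' \<subseteq> carrier R" by (rule canonical_proj_vimage_in_carrier[OF Ann_ideal S'(1)])
        have "{x \<in> Spec. psi R z sm x \<in> C} = VV R Spec col (\<Union> S')"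
        proof (intro equalityI subsetI)
          fix x assume "x \<in> {x \<in> Spec. psi R z sm x \<in> C}"
          then have x: "x \<in> Spec" and "S' \<subseteq> psi R z sm x" using S'(2) unfolding VV_def by auto
          then have "\<Union> S' \<subseteq> col x"
            using Union_sub_iff[OF col_ideal[OF Spec_D(1)[OF x]] Ann_sub[OF Spec_D(1)[OF x]] S'(1)] psiI
            by simp
          then show "x \<in> VV R Spec col (\<Union> S')" using x unfolding VV_def by simp
        next
          fix x assume "x \<in> VV R Spec col (\<Union> S')"
          then have x: "x \<in> Spec" and "\<Union> S' \<subseteq> col x" unfolding VV_def by auto
          then have "S' \<subseteq> psi R z sm x"
            using Union_sub_iff[OF col_ideal[OF Spec_D(1)[OF x]] Ann_sub[OF Spec_D(1)[OF x]] S'(1)] psiI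
            by simp
          then show "x \<in> {x \<in> Spec. psi R z sm x \<in> C}" using x psiY[OF x] S'(2) unfolding VV_def by simp
        qed
        then show "closedin (ZT R Spec col) {x \<in> Spec. psi R z sm x \<in> C}"
          using Z.closed_V[OF Uc] by simp
      qed
      show "closed_map (ZT R Spec col) (ZT ?Q ?Yc (\<lambda>P. P)) (psi R z sm)"
        unfolding closed_map_def
      proof (intro allI impI)
        fix U assume "closedin (ZT R Spec col) U"
        then obtain S where S: "S \<subseteq> carrier R" "U = VV R Spec col S"
          unfolding Z.closedin_T by metis
        have Sc: "(+>) AnnM ` S \<subseteq> carrier ?Q" using S(1) quot_carr by blast
        have "psi R z sm ` U = VV ?Q ?Yc (\<lambda>P. P) ((+>) AnnM ` S)"
        proof (intro equalityI subsetI)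
          fix y assume "y \<in> psi R z sm ` U"
          then obtain x where x: "x \<in> Spec" "S \<subseteq> col x" "y = psi R z sm x" using S(2) unfolding VV_def by auto
          have "(+>) AnnM ` S \<subseteq> psi R z sm x" using x(2) psiI by (simp add: image_mono)
          then show "y \<in> VV ?Q ?Yc (\<lambda>P. P) ((+>) AnnM ` S)" using x psiY[OF x(1)] unfolding VV_def by simp
        next
          fix y assume "y \<in> VV ?Q ?Yc (\<lambda>P. P) ((+>) AnnM ` S)"
          then have y: "y \<in> ?Yc" and yS: "(+>) AnnM ` S \<subseteq> y" unfolding VV_def by auto
          then obtain x where x: "x \<in> Spec" "y = psi R z sm x" using surj by (metis imageE)
          have "(+>) AnnM ` S \<subseteq> (+>) AnnM ` col x" using yS x(2) psiI by simp
          then have "S \<subseteq> col x"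
            using img_sub_iff[OF col_ideal[OF Spec_D(1)[OF x(1)]] Ann_sub[OF Spec_D(1)[OF x(1)]] S(1)] by simp
          then have "x \<in> U" using S(2) x(1) unfolding VV_def by simp
          then show "y \<in> psi R z sm ` U" using x(2) by simp
        qed
        then show "closedin (ZT ?Q ?Yc (\<lambda>P. P)) (psi R z sm ` U)" using ZY.closed_V[OF Sc] by simp
      qed
      show "psi R z sm ` topspace (ZT R Spec col) = topspace (ZT ?Q ?Yc (\<lambda>P. P))"
        unfolding Z.topspace_T ZY.topspace_T by (rule surj)
      show "inj_on (psi R z sm) (topspace (ZT R Spec col))"
        unfolding Z.topspace_T by (rule injpsi)
    qed
    then show "zariskiM R pl sm homeomorphic_space zariskiR ?Q"
      unfolding zariskiM_eq zariskiR_eq homeomorphic_space by blast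
  next
    assume "zariskiM R pl sm homeomorphic_space zariskiR ?Q"
    then have "t0_space (zariskiM R pl sm)"
      using homeomorphic_t0_space t0Yc unfolding zariskiR_eq by blast
    then show "inj_on col Spec" unfolding zariskiM_eq Z.t0_T .
  qed
qed

end


theorem theorem7p1:
  fixes R :: "('r,'b) ring_scheme"
    and pl :: "'m::complete_lattice \<Rightarrow> 'm \<Rightarrow> 'm"
    and z :: 'm
    and sm :: "'r \<Rightarrow> 'm \<Rightarrow> 'm"
  assumes M: "le_module R pl z sm"
    and surj: "psi R z sm ` SpecM R pl sm = SpecR (R Quot Ann R z sm)"
  shows "(spectral_space (zariskiM R pl sm) \<longleftrightarrow> t0_space (zariskiM R pl sm))
       \<and> (t0_space (zariskiM R pl sm) \<longleftrightarrow>
            (\<forall>p\<in>SpecM R pl sm. \<forall>q\<in>SpecM R pl sm.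
               Vstar R pl sm p = Vstar R pl sm q \<longrightarrow> p = q))
       \<and> ((\<forall>p\<in>SpecM R pl sm. \<forall>q\<in>SpecM R pl sm.
               Vstar R pl sm p = Vstar R pl sm q \<longrightarrow> p = q) \<longleftrightarrow>
            (\<forall>P\<in>SpecR R. \<forall>p\<in>SpecP R pl sm P. \<forall>q\<in>SpecP R pl sm P. p = q))
       \<and> ((\<forall>P\<in>SpecR R. \<forall>p\<in>SpecP R pl sm P. \<forall>q\<in>SpecP R pl sm P. p = q) \<longleftrightarrow>
            inj_on (psi R z sm) (SpecM R pl sm))
       \<and> (inj_on (psi R z sm) (SpecM R pl sm) \<longleftrightarrow>
            zariskiM R pl sm homeomorphic_space zariskiR (R Quot Ann R z sm))"
proof -
  have cr: "cring R" using M unfolding le_module_def by blast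
  have lmI: "lm R pl z sm" by (rule lm.intro[OF cr lm_axioms.intro[OF M]])
  have lmsI: "lms R pl z sm" by (rule lms.intro[OF lmI lms_axioms.intro[OF surj]])
  interpret L: lms R pl z sm by (rule lmsI)
  have e1: "spectral_space (zariskiM R pl sm) \<longleftrightarrow> t0_space (zariskiM R pl sm)"
    unfolding L.zariskiM_eq by (rule L.ZS.spectral_T)
  have e2: "t0_space (zariskiM R pl sm) \<longleftrightarrow> inj_on (colon R sm) (SpecM R pl sm)"
    unfolding L.zariskiM_eq by (rule L.Z.t0_T)
  note e3 = L.inj_Vstar
  note e4 = L.inj_SpecP
  note e5 = L.inj_psi
  note e6 = L.homeo
  show ?thesis
  proof (intro conjI)
    show "spectral_space (zariskiM R pl sm) \<longleftrightarrow> t0_space (zariskiM R pl sm)" by (rule e1)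
    show "t0_space (zariskiM R pl sm) \<longleftrightarrow>
            (\<forall>p\<in>SpecM R pl sm. \<forall>q\<in>SpecM R pl sm. Vstar R pl sm p = Vstar R pl sm q \<longrightarrow> p = q)"
      unfolding e2 e3 by (rule refl)
    show "(\<forall>p\<in>SpecM R pl sm. \<forall>q\<in>SpecM R pl sm. Vstar R pl sm p = Vstar R pl sm q \<longrightarrow> p = q) \<longleftrightarrow>
            (\<forall>P\<in>SpecR R. \<forall>p\<in>SpecP R pl sm P. \<forall>q\<in>SpecP R pl sm P. p = q)"
      unfolding e3 e4 by (rule refl)
    show "(\<forall>P\<in>SpecR R. \<forall>p\<in>SpecP R pl sm P. \<forall>q\<in>SpecP R pl sm P. p = q) \<longleftrightarrow>
            inj_on (psi R z sm) (SpecM R pl sm)"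
      unfolding e4 e5 by (rule refl)
    show "inj_on (psi R z sm) (SpecM R pl sm) \<longleftrightarrow>
            zariskiM R pl sm homeomorphic_space zariskiR (R Quot Ann R z sm)"
      unfolding e5 e6 by (rule refl)
  qed
qed

end
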